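(* Let $P$ and $Q$ be lower primes. Then $PQ-QP$ lies in the two-sided ideal of $\mathcal{A}$ generated by $\{(RL)D-D(RL) : D \text{ a lower prime}\}$.
   Context: $\mathcal{A}$ is the free associative $\mathbb{C}$-algebra on noncommuting generators $L,R$; words are finite products of these letters. A word is balanced if it contains equally many $L$'s and $R$'s. A word is prime if it is nonempty, balanced, and not a product of two nonempty balanced words. For a balanced word $W=a_1\cdots a_n$, $e_k(W)=\sum_{i=1}^k\overline{a_i}$ with $\overline{R}=1$, $\overline{L}=-1$. A prime $P$ of length $n$ is a lower prime if $e_k(P)<0$ for all $1\le k\le n-1$. *)

theory Defs
  imports Complex_Main
begin

datatype letter = L | R

type_synonym word = "letter list"

text \<open>Elements of the free associative algebra: finitely supported coefficient functions on words.\<close>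
type_synonym alg = "word \<Rightarrow> complex"

definition is_poly :: "alg \<Rightarrow> bool" where
  "is_poly f \<longleftrightarrow> finite {w. f w \<noteq> 0}"

definition mon :: "word \<Rightarrow> alg" where
  "mon u = (\<lambda>w. if w = u then 1 else 0)"

definition amult :: "alg \<Rightarrow> alg \<Rightarrow> alg" (infixl "\<star>" 70) where
  "f \<star> g = (\<lambda>w. \<Sum>i\<in>{0..length w}. f (take i w) * g (drop i w))"

inductive_set ideal_gen :: "alg set \<Rightarrow> alg set" for S where
  zero: "(\<lambda>_. 0) \<in> ideal_gen S"
| gen: "\<lbrakk>x \<in> S; is_poly a; is_poly b\<rbrakk> \<Longrightarrow> a \<star> x \<star> b \<in> ideal_gen S"
| add: "\<lbrakk>x \<in> ideal_gen S; y \<in> ideal_gen S\<rbrakk> \<Longrightarrow> (\<lambda>w. x w + y w) \<in> ideal_gen S"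

definition balanced :: "word \<Rightarrow> bool" where
  "balanced w \<longleftrightarrow> length (filter (\<lambda>a. a = L) w) = length (filter (\<lambda>a. a = R) w)"

definition prime_word :: "word \<Rightarrow> bool" where
  "prime_word w \<longleftrightarrow> w \<noteq> [] \<and> balanced w \<and>
     \<not> (\<exists>u v. u \<noteq> [] \<and> v \<noteq> [] \<and> balanced u \<and> balanced v \<and> w = u @ v)"

fun lval :: "letter \<Rightarrow> int" where
  "lval R = 1" | "lval L = -1"

definition e :: "nat \<Rightarrow> word \<Rightarrow> int" where
  "e k w = (\<Sum>i<k. lval (w ! i))"

definition lower_prime :: "word \<Rightarrow> bool" where
  "lower_prime P \<longleftrightarrow> prime_word P \<and> (\<forall>k. 1 \<le> k \<and> k \<le> length P - 1 \<longrightarrow> e k P < 0)"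

end

theory Submission
  imports Defs
begin

lemma mon_mult: "mon a \<star> mon b = mon (a @ b)"
proof
  fix w
  have eq: "(take i w = a \<and> drop i w = b) \<longleftrightarrow> (w = a @ b \<and> i = length a)"
    if "i \<in> {0..length w}" for i
  proof
    assume h: "take i w = a \<and> drop i w = b"
    then have "w = a @ b" by (metis append_take_drop_id)
    moreover have "i = length a" using h that by auto
    ultimately show "w = a @ b \<and> i = length a" by simp
  qed auto
  have "(mon a \<star> mon b) w = (\<Sum>i\<in>{0..length w}. if w = a @ b \<and> i = length a then 1 else 0)"
    unfolding amult_def mon_def
    by (rule sum.cong) (auto simp: eq[symmetric])
  also have "\<dots> = mon (a @ b) w"
    unfolding mon_def by (cases "w = a @ b") auto
  finally show "(mon a \<star> mon b) w = mon (a @ b) w" .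
qed

lemma mult_diff_right: "f \<star> (\<lambda>w. g w - h w) = (\<lambda>w. (f \<star> g) w - (f \<star> h) w)"
  unfolding amult_def by (auto simp: algebra_simps sum_subtractf)

lemma mult_diff_left: "(\<lambda>w. g w - h w) \<star> f = (\<lambda>w. (g \<star> f) w - (h \<star> f) w)"
  unfolding amult_def by (auto simp: algebra_simps sum_subtractf)

lemma mult_neg_left: "(\<lambda>w. - g w) \<star> f = (\<lambda>w. - (g \<star> f) w)"
  unfolding amult_def by (auto simp: sum_negf)

lemma is_poly_mon: "is_poly (mon u)"
  unfolding is_poly_def mon_def by auto

lemma is_poly_neg_mon: "is_poly (\<lambda>w. - mon u w)"
  unfolding is_poly_def mon_def by auto

abbreviation "IS \<equiv> ideal_gen {(\<lambda>w. mon ([R, L] @ D) w - mon (D @ [R, L]) w) | D. lower_prime D}"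

inductive stp :: "word \<Rightarrow> word \<Rightarrow> bool" where
  s1: "lower_prime D \<Longrightarrow> stp (a @ [R,L] @ D @ b) (a @ D @ [R,L] @ b)"
| s2: "lower_prime D \<Longrightarrow> stp (a @ D @ [R,L] @ b) (a @ [R,L] @ D @ b)"

abbreviation "eqv \<equiv> stp\<^sup>*\<^sup>*"

lemma stp_ideal:
  assumes "stp y z" shows "(\<lambda>w. mon y w - mon z w) \<in> IS"
  using assms
proof cases
  case (s1 D a b)
  let ?g = "\<lambda>w. mon ([R, L] @ D) w - mon (D @ [R, L]) w"
  have "mon a \<star> ?g \<star> mon b \<in> IS"
    by (rule ideal_gen.gen) (use s1 is_poly_mon in auto)
  moreover have "mon a \<star> ?g \<star> mon b = (\<lambda>w. mon y w - mon z w)"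
    using s1 by (simp add: mult_diff_right mult_diff_left mon_mult)
  ultimately show ?thesis by simp
next
  case (s2 D a b)
  let ?g = "\<lambda>w. mon ([R, L] @ D) w - mon (D @ [R, L]) w"
  have "(\<lambda>w. - mon a w) \<star> ?g \<star> mon b \<in> IS"
    by (rule ideal_gen.gen) (use s2 is_poly_mon is_poly_neg_mon in auto)
  moreover have "(\<lambda>w. - mon a w) \<star> ?g \<star> mon b = (\<lambda>w. mon y w - mon z w)"
    using s2 by (simp add: mult_neg_left mult_diff_right mult_diff_left mon_mult)
  ultimately show ?thesis by simp
qed

lemma eqv_ideal:
  assumes "eqv x y" shows "(\<lambda>w. mon x w - mon y w) \<in> IS"
  using assms
proof (induction rule: rtranclp_induct)
  case base
  have "(\<lambda>_. 0) \<in> IS" by (rule ideal_gen.zero)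
  then show ?case by simp
next
  case (step y z)
  have "(\<lambda>w. (mon x w - mon y w) + (mon y w - mon z w)) \<in> IS"
    by (rule ideal_gen.add) (use step stp_ideal in auto)
  then show ?case by simp
qed

lemma stp_cong: "stp x y \<Longrightarrow> stp (a @ x @ b) (a @ y @ b)"
proof (induction rule: stp.induct)
  case (s1 D a' b')
  then show ?case using stp.s1[of D "a @ a'" "b' @ b"] by simp
next
  case (s2 D a' b')
  then show ?case using stp.s2[of D "a @ a'" "b' @ b"] by simp
qed

lemma eqv_cong: "eqv x y \<Longrightarrow> eqv (a @ x @ b) (a @ y @ b)"
proof (induction rule: rtranclp_induct)
  case base then show ?case by simp
next
  case (step y z)
  then show ?case by (meson rtranclp.rtrancl_into_rtrancl stp_cong)
qed

lemma stp_sym: "stp x y \<Longrightarrow> stp y x"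
proof (induction rule: stp.induct)
  case (s1 D a b) then show ?case by (rule stp.s2)
next
  case (s2 D a b) then show ?case by (rule stp.s1)
qed

lemma eqv_sym: "eqv x y \<Longrightarrow> eqv y x"
proof (induction rule: rtranclp_induct)
  case base then show ?case by simp
next
  case (step y z)
  then show ?case by (meson converse_rtranclp_into_rtranclp stp_sym)
qed

lemma eqv_trans: "eqv x y \<Longrightarrow> eqv y z \<Longrightarrow> eqv x z"
  by (rule rtranclp_trans)

inductive lpp :: "word \<Rightarrow> bool" where
  nil: "lpp []"
| cons: "lower_prime p \<Longrightarrow> lpp w \<Longrightarrow> lpp (p @ w)"

lemma RL_comm: "lpp W \<Longrightarrow> eqv ([R,L] @ W) (W @ [R,L])"
proof (induction rule: lpp.induct)
  case nil then show ?case by simp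
next
  case (cons p w)
  have "eqv ([R,L] @ p @ w) (p @ [R,L] @ w)"
    using stp.s1[OF cons(1), of "[]" w] by auto
  moreover have "eqv (p @ [R,L] @ w) (p @ w @ [R,L])"
    using eqv_cong[OF cons(3), of p "[]"] by simp
  ultimately show ?case by (simp add: eqv_trans)
qed

lemma C1:
  assumes IH: "\<And>p q. lower_prime p \<Longrightarrow> lower_prime q \<Longrightarrow> length p + length q \<le> m \<Longrightarrow> eqv (p @ q) (q @ p)"
  shows "lpp V \<Longrightarrow> lower_prime p \<Longrightarrow> length p + length V \<le> m \<Longrightarrow> eqv (p @ V) (V @ p)"
proof (induction rule: lpp.induct)
  case nil then show ?case by simp
next
  case (cons q v)
  have "eqv (p @ q @ v) (q @ p @ v)"
    using eqv_cong[OF IH[of p q], of "[]" v] cons by auto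
  moreover have "eqv (q @ p @ v) (q @ v @ p)"
    using eqv_cong[OF cons.IH, of q "[]"] cons by auto
  ultimately show ?case by (simp add: eqv_trans)
qed

lemma C2:
  assumes IH: "\<And>p q. lower_prime p \<Longrightarrow> lower_prime q \<Longrightarrow> length p + length q \<le> m \<Longrightarrow> eqv (p @ q) (q @ p)"
  shows "lpp W \<Longrightarrow> lpp V \<Longrightarrow> length W + length V \<le> m \<Longrightarrow> eqv (W @ V) (V @ W)"
proof (induction rule: lpp.induct)
  case nil then show ?case by simp
next
  case (cons p w)
  have "eqv (p @ w @ V) (p @ V @ w)"
    using eqv_cong[OF cons.IH, of p "[]"] cons by auto
  moreover have "eqv (p @ V @ w) (V @ p @ w)"
    using eqv_cong[OF C1[OF IH, where V=V and p=p], where a="[]" and b=w] cons by auto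
  ultimately show ?case by (simp add: eqv_trans)
qed


definition ht :: "word \<Rightarrow> int" where "ht w = sum_list (map lval w)"

lemma ht_simps[simp]: "ht [] = 0" "ht (x # w) = lval x + ht w" "ht (u @ v) = ht u + ht v"
  unfolding ht_def by auto

lemma e_ht: "k \<le> length w \<Longrightarrow> e k w = ht (take k w)"
proof (induction k)
  case 0 then show ?case by (simp add: e_def)
next
  case (Suc k)
  then have "take (Suc k) w = take k w @ [w ! k]" by (simp add: take_Suc_conv_app_nth)
  then show ?case using Suc by (simp add: e_def)
qed

lemma balanced_ht: "balanced w \<longleftrightarrow> ht w = 0"
proof -
  have "int (length (filter (\<lambda>a. a = R) w)) - int (length (filter (\<lambda>a. a = L) w)) = ht w"
  proof (induction w)
    case Nil then show ?case by simp
  next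
    case (Cons x w) then show ?case by (cases x) auto
  qed
  then show ?thesis unfolding balanced_def by linarith
qed

definition pre :: "word \<Rightarrow> bool" where "pre w \<longleftrightarrow> (\<forall>k. ht (take k w) \<le> 0)"

lemma pre_lpp: "ht w = 0 \<Longrightarrow> pre w \<Longrightarrow> lpp w"
proof (induction "length w" arbitrary: w rule: less_induct)
  case less
  show ?case
  proof (cases "w = []")
    case True then show ?thesis by (simp add: lpp.nil)
  next
    case False
    define S where "S = {k. 1 \<le> k \<and> k \<le> length w \<and> ht (take k w) = 0}"
    have lS: "length w \<in> S" using False less.prems unfolding S_def by (simp add: Suc_le_eq)
    define k where "k = (LEAST k. k \<in> S)"
    have kS: "k \<in> S" unfolding k_def using lS by (rule LeastI)
    have kmin: "\<And>j. j \<in> S \<Longrightarrow> k \<le> j" unfolding k_def by (rule Least_le)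
    define p where "p = take k w"
    define r where "r = drop k w"
    have w: "w = p @ r" unfolding p_def r_def by simp
    have k1: "1 \<le> k" "k \<le> length w" "ht p = 0" using kS unfolding S_def p_def by auto
    have lp: "length p = k" using k1 unfolding p_def by simp
    have pne: "p \<noteq> []" using k1 lp by auto
    have tk: "\<And>j. j \<le> k \<Longrightarrow> take j p = take j w" unfolding p_def by (simp add: min_def)
    have prime: "prime_word p"
      unfolding prime_word_def
    proof (intro conjI)
      show "p \<noteq> []" by (rule pne)
      show "balanced p" using k1 by (simp add: balanced_ht)
    next
      show "\<not> (\<exists>u v. u \<noteq> [] \<and> v \<noteq> [] \<and> balanced u \<and> balanced v \<and> p = u @ v)"
      proof
      assume "\<exists>u v. u \<noteq> [] \<and> v \<noteq> [] \<and> balanced u \<and> balanced v \<and> p = u @ v"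
      then obtain u v where uv: "u \<noteq> []" "v \<noteq> []" "balanced u" "p = u @ v" by blast
      have lu: "length u < k" "1 \<le> length u" using uv lp by (auto simp: Suc_le_eq)
      have "take (length u) w = u" using tk[of "length u"] lu uv(4) by simp
      then have "length u \<in> S" using lu k1 uv(3) unfolding S_def by (simp add: balanced_ht)
      then show False using kmin lu by fastforce
    qed
    qed
    have lower: "lower_prime p"
      unfolding lower_prime_def
    proof (intro conjI allI impI)
      show "prime_word p" by (rule prime)
      fix j assume j: "1 \<le> j \<and> j \<le> length p - 1"
      have "j \<le> length p" "j \<le> k" using j lp by auto
      then have "e j p = ht (take j w)" using tk[of j] by (simp add: e_ht)
      moreover have "ht (take j w) \<le> 0" using less.prems(2) unfolding pre_def by blast
      moreover have "j \<notin> S" using kmin j lp k1 by fastforce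
      then have "ht (take j w) \<noteq> 0" using j lp k1 unfolding S_def by auto
      ultimately show "e j p < 0" by simp
    qed
    have hr: "ht r = 0" using less.prems(1) w k1 by simp
    have prer: "pre r" unfolding pre_def
    proof
      fix j
      have "take (k + j) w = p @ take j r" unfolding p_def r_def by (simp add: take_add)
      moreover have "ht (take (k + j) w) \<le> 0" using less.prems(2) unfolding pre_def by blast
      ultimately show "ht (take j r) \<le> 0" using k1 by simp
    qed
    have "length r < length w" using w pne by simp
    then have "lpp r" using less.hyps hr prer by blast
    then show ?thesis using w lower by (simp add: lpp.cons)
  qed
qed

lemma lower_decomp:
  assumes "lower_prime P"
  shows "\<exists>W. P = L # W @ [R] \<and> lpp W"
proof -
  have P0: "P \<noteq> []" "ht P = 0" and cond: "\<And>k. 1 \<le> k \<Longrightarrow> k \<le> length P - 1 \<Longrightarrow> e k P < 0"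
    using assms unfolding lower_prime_def prime_word_def by (auto simp: balanced_ht)
  obtain x P' where P: "P = x # P'" using P0 by (cases P) auto
  have x: "x = L"
  proof (rule ccontr)
    assume "x \<noteq> L" then have xR: "x = R" by (cases x) auto
    show False
    proof (cases "P' = []")
      case True then show False using P0 P xR by simp
    next
      case False
      then have "e 1 P < 0" using cond[of 1] P by (cases P') auto
      then show False using P xR by (simp add: e_ht)
    qed
  qed
  have "P' \<noteq> []" using P0 P x by auto
  then obtain W y where P': "P' = W @ [y]" by (metis rev_exhaust)
  have y: "y = R"
  proof (rule ccontr)
    assume "y \<noteq> R" then have yL: "y = L" by (cases y) auto
    then have hW: "ht W = 2" using P0 P P' x by simp
    have "e (Suc (length W)) P < 0" using cond[of "Suc (length W)"] P P' by simp
    moreover have "take (Suc (length W)) P = L # W" using P P' x by simp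
    ultimately show False using hW P P' by (simp add: e_ht)
  qed
  have hW: "ht W = 0" using P0 P P' x y by simp
  have "pre W" unfolding pre_def
  proof
    fix k
    show "ht (take k W) \<le> 0"
    proof (cases "k \<le> length W")
      case True
      have "e (Suc k) P < 0" using cond[of "Suc k"] P P' True by simp
      moreover have "take (Suc k) P = L # take k W" using P P' x True by simp
      ultimately show ?thesis using True P P' by (simp add: e_ht)
    next
      case False then show ?thesis using hW by simp
    qed
  qed
  then show ?thesis using P P' x y hW pre_lpp by blast
qed

lemma main_comm:
  "lower_prime P \<Longrightarrow> lower_prime Q \<Longrightarrow> eqv (P @ Q) (Q @ P)"
proof (induction "length P + length Q" arbitrary: P Q rule: less_induct)
  case less
  obtain W where W: "P = L # W @ [R]" "lpp W" using lower_decomp[OF less.prems(1)] by blast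
  obtain V where V: "Q = L # V @ [R]" "lpp V" using lower_decomp[OF less.prems(2)] by blast
  have IH: "\<And>p q. lower_prime p \<Longrightarrow> lower_prime q \<Longrightarrow> length p + length q \<le> length W + length V
      \<Longrightarrow> eqv (p @ q) (q @ p)"
    using less.hyps W V by force
  have WV: "eqv (W @ V) (V @ W)" using C2[OF IH W(2) V(2)] by simp
  have "eqv ([L] @ (W @ [R,L]) @ (V @ [R])) ([L] @ ([R,L] @ W) @ (V @ [R]))"
    using eqv_cong[OF eqv_sym[OF RL_comm[OF W(2)]]] by blast
  moreover have "eqv ([L,R,L] @ (W @ V) @ [R]) ([L,R,L] @ (V @ W) @ [R])"
    using eqv_cong[OF WV] by blast
  moreover have "eqv (([L] @ V) @ ([R,L] @ W) @ [R]) (([L] @ V) @ (W @ [R,L]) @ [R])"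
    using eqv_cong[OF RL_comm[OF W(2)]] by blast
  moreover have "eqv ([L] @ ([R,L] @ V) @ (W @ [R])) ([L] @ (V @ [R,L]) @ (W @ [R]))"
    using eqv_cong[OF RL_comm[OF V(2)]] by blast
  ultimately show ?case using W(1) V(1) by (auto elim: eqv_trans)
qed

theorem lemma5p2:
  assumes "lower_prime P" and "lower_prime Q"
  shows "(\<lambda>w. mon (P @ Q) w - mon (Q @ P) w)
           \<in> ideal_gen {(\<lambda>w. mon ([R, L] @ D) w - mon (D @ [R, L]) w) | D. lower_prime D}"
  using eqv_ideal[OF main_comm[OF assms]] .

end
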